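(* Let $X$ be a Cantor set with a compatible metric $d$, and let $\sigma$ be an aperiodic homeomorphism of $X$ whose minimal sets are exactly $Y_1,\dots,Y_k$ ($k<\infty$). For $i=1,\dots,k$ let $$E_i=\{x\in X:\ \text{for every }\varepsilon>0\text{ there is an }\varepsilon\text{-chain from }x\text{ to some point of }Y_i\}.$$ Then $\sigma$ is chain transitive if and only if $E_1=E_2=\dots=E_k=X$.
   Context: $\sigma$ is aperiodic if every $\sigma$-orbit is infinite. A minimal set is a nonempty closed $\sigma$-invariant set with no nonempty proper closed invariant subset. An $\varepsilon$-chain from $x$ to $y$ is a finite sequence $x_0=x,x_1,\dots,x_n=y$ with $d(\sigma(x_i),x_{i+1})<\varepsilon$ for all $i<n$. $\sigma$ is chain transitive if for all $x,y\in X$ and every $\varepsilon>0$ there is an $\varepsilon$-chain from $x$ to $y$. *)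

theory Defs
  imports "HOL-Analysis.Analysis"
begin

text \<open>Here X is a subset of a metric space, and the
  compatible metric d is the ambient metric dist restricted to X.\<close>
definition cantor_set :: "'a::metric_space set \<Rightarrow> bool" where
  "cantor_set X \<longleftrightarrow> X \<noteq> {} \<and> compact X \<and> (\<forall>x\<in>X. x islimpt X) \<and>
     (\<forall>C. C \<subseteq> X \<and> connected C \<longrightarrow> (\<exists>a. C \<subseteq> {a}))"

definition aperiodic :: "'a set \<Rightarrow> ('a \<Rightarrow> 'a) \<Rightarrow> bool" where
  "aperiodic X \<sigma> \<longleftrightarrow> (\<forall>x\<in>X. \<forall>n::nat. n > 0 \<longrightarrow> (\<sigma> ^^ n) x \<noteq> x)"

definition invariant_set :: "'a set \<Rightarrow> ('a \<Rightarrow> 'a) \<Rightarrow> 'a set \<Rightarrow> bool" where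
  "invariant_set X \<sigma> S \<longleftrightarrow> S \<subseteq> X \<and> \<sigma> ` S = S"

definition minimal_set :: "'a::topological_space set \<Rightarrow> ('a \<Rightarrow> 'a) \<Rightarrow> 'a set \<Rightarrow> bool" where
  "minimal_set X \<sigma> S \<longleftrightarrow> S \<noteq> {} \<and> closed S \<and> invariant_set X \<sigma> S \<and>
     (\<forall>T. T \<noteq> {} \<and> T \<subseteq> S \<and> closed T \<and> invariant_set X \<sigma> T \<longrightarrow> T = S)"

definition eps_chain :: "'a::metric_space set \<Rightarrow> ('a \<Rightarrow> 'a) \<Rightarrow> real \<Rightarrow> 'a \<Rightarrow> 'a \<Rightarrow> bool" where
  "eps_chain X \<sigma> \<epsilon> x y \<longleftrightarrow> (\<exists>(n::nat) (p::nat \<Rightarrow> 'a). p 0 = x \<and> p n = y \<and>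
     (\<forall>i\<le>n. p i \<in> X) \<and> (\<forall>i<n. dist (\<sigma> (p i)) (p (Suc i)) < \<epsilon>))"

definition chain_transitive :: "'a::metric_space set \<Rightarrow> ('a \<Rightarrow> 'a) \<Rightarrow> bool" where
  "chain_transitive X \<sigma> \<longleftrightarrow> (\<forall>x\<in>X. \<forall>y\<in>X. \<forall>\<epsilon>>0. eps_chain X \<sigma> \<epsilon> x y)"

definition chain_basin :: "'a::metric_space set \<Rightarrow> ('a \<Rightarrow> 'a) \<Rightarrow> 'a set \<Rightarrow> 'a set" where
  "chain_basin X \<sigma> Y = {x\<in>X. \<forall>\<epsilon>>0. \<exists>y\<in>Y. eps_chain X \<sigma> \<epsilon> x y}"

end

theory Submission imports Defs begin

lemma inv_tau:
  assumes hom: "homeomorphism X X \<sigma> \<tau>" and S: "invariant_set X \<sigma> S" and x: "x \<in> S"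
  shows "\<tau> x \<in> S"
proof -
  from S x obtain s where "s \<in> S" "x = \<sigma> s" unfolding invariant_set_def by blast
  moreover have "s \<in> X" using S \<open>s \<in> S\<close> unfolding invariant_set_def by blast
  moreover have "\<tau> (\<sigma> s) = s" using hom \<open>s \<in> X\<close> by (rule homeomorphism_apply1)
  ultimately show ?thesis by simp
qed

lemma exists_minimal:
  assumes X: "compact X" and hom: "homeomorphism X X \<sigma> \<tau>"
    and T: "T \<noteq> {}" "closed T" "invariant_set X \<sigma> T"
  shows "\<exists>M. minimal_set X \<sigma> M \<and> M \<subseteq> T"
proof -
  define F where "F = {S. S \<noteq> {} \<and> closed S \<and> invariant_set X \<sigma> S \<and> S \<subseteq> T}"
  define A where "A = (\<lambda>S. X - S) ` F"
  have TX: "T \<subseteq> X" using T unfolding invariant_set_def by auto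
  have FX: "S \<subseteq> X" if "S \<in> F" for S using that TX unfolding F_def by auto
  have TF: "T \<in> F" using T unfolding F_def by auto
  have "\<exists>M\<in>A. \<forall>Z\<in>A. M \<subseteq> Z \<longrightarrow> Z = M"
  proof (rule subset_Zorn)
    fix C assume C: "subset.chain A C"
    show "\<exists>U\<in>A. \<forall>Z\<in>C. Z \<subseteq> U"
    proof (cases "C = {}")
      case True then show ?thesis using TF unfolding A_def by blast
    next
      case False
      define D where "D = (\<lambda>c. X - c) ` C"
      have CA: "C \<subseteq> A" using C by (simp add: subset_chain_def)
      have DF: "D \<subseteq> F"
      proof
        fix S assume "S \<in> D"
        then obtain c where c: "c \<in> C" "S = X - c" unfolding D_def by auto
        then obtain S' where "S' \<in> F" "c = X - S'" using CA unfolding A_def by auto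
        then have "S = S'" using c FX by auto
        then show "S \<in> F" using \<open>S' \<in> F\<close> by simp
      qed
      have Dch: "subset.chain F D"
        unfolding subset_chain_def
      proof (intro conjI ballI)
        show "D \<subseteq> F" by (rule DF)
        fix S1 S2 assume "S1 \<in> D" "S2 \<in> D"
        then obtain c1 c2 where "c1 \<in> C" "c2 \<in> C" "S1 = X - c1" "S2 = X - c2" unfolding D_def by auto
        moreover have "c1 \<subseteq> c2 \<or> c2 \<subseteq> c1" using C \<open>c1 \<in> C\<close> \<open>c2 \<in> C\<close> by (simp add: subset_chain_def)
        ultimately show "S1 \<subseteq> S2 \<or> S2 \<subseteq> S1" by (metis Diff_mono order_refl)
      qed
      have Dne: "D \<noteq> {}" using False unfolding D_def by auto
      have nonempty: "\<Inter>D \<noteq> {}"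
      proof -
        have "X \<inter> \<Inter>D \<noteq> {}"
        proof (rule compact_imp_fip[OF X])
          show "closed S" if "S \<in> D" for S using that DF unfolding F_def by auto
          fix F' assume F': "finite F'" "F' \<subseteq> D"
          show "X \<inter> \<Inter>F' \<noteq> {}"
          proof (cases "F' = {}")
            case True
            have "X \<noteq> {}" using T(1) TX by blast
            then show ?thesis using True by simp
          next
            case False
            have "subset.chain F F'" using Dch F'(2) by (simp add: subset_chain_def subset_iff)
            then have "\<Inter>F' \<in> F'" using Inter_in_chain F'(1) False by metis
            then have inF: "\<Inter>F' \<in> F" using F' DF by auto
            have "\<Inter>F' \<noteq> {}" "\<Inter>F' \<subseteq> X" using FX[OF inF] inF by (simp_all add: F_def)
            then show ?thesis by blast
          qed
        qed
        then show ?thesis by auto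
      qed
      have invD: "invariant_set X \<sigma> (\<Inter>D)"
      proof -
        have sub: "\<Inter>D \<subseteq> X" using Dne DF FX by blast
        have "\<sigma> ` \<Inter>D \<subseteq> \<Inter>D"
        proof
          fix y assume "y \<in> \<sigma> ` \<Inter>D"
          then obtain x where x: "x \<in> \<Inter>D" "y = \<sigma> x" by auto
          show "y \<in> \<Inter>D"
          proof
            fix S assume "S \<in> D"
            then have "S \<in> F" "x \<in> S" using DF x by auto
            then show "y \<in> S" using x unfolding F_def invariant_set_def by auto
          qed
        qed
        moreover have "\<Inter>D \<subseteq> \<sigma> ` \<Inter>D"
        proof
          fix y assume y: "y \<in> \<Inter>D"
          have "\<tau> y \<in> \<Inter>D"
          proof
            fix S assume "S \<in> D"
            then have "S \<in> F" "y \<in> S" using DF y by auto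
            then show "\<tau> y \<in> S" using inv_tau[OF hom] unfolding F_def by auto
          qed
          moreover have "\<sigma> (\<tau> y) = y" using hom sub y unfolding homeomorphism_def by auto
          ultimately show "y \<in> \<sigma> ` \<Inter>D" by (metis imageI)
        qed
        ultimately show ?thesis using sub unfolding invariant_set_def by auto
      qed
      have "closed (\<Inter>D)" using DF by (intro closed_Inter) (auto simp: F_def)
      moreover have "\<Inter>D \<subseteq> T" using DF Dne by (auto simp: F_def)
      ultimately have "\<Inter>D \<in> F"
        unfolding F_def using nonempty invD by simp
      then have UA: "X - \<Inter>D \<in> A" unfolding A_def by auto
      have "\<forall>Z\<in>C. Z \<subseteq> X - \<Inter>D"
      proof
        fix Z assume "Z \<in> C"
        then have "X - Z \<in> D" unfolding D_def by blast
        moreover from \<open>Z \<in> C\<close> CA obtain S where "S \<in> F" "Z = X - S" unfolding A_def by blast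
        ultimately have "X - Z \<in> D" "Z \<subseteq> X" by auto
        then show "Z \<subseteq> X - \<Inter>D" by blast
      qed
      then show ?thesis using UA by blast
    qed
  qed
  then obtain M where M: "M \<in> F" and max: "\<forall>Z\<in>A. X - M \<subseteq> Z \<longrightarrow> Z = X - M"
    unfolding A_def by auto
  have "minimal_set X \<sigma> M"
    unfolding minimal_set_def
  proof (intro conjI allI impI)
    show "M \<noteq> {}" "closed M" "invariant_set X \<sigma> M" using M unfolding F_def by auto
    fix T' assume T': "T' \<noteq> {} \<and> T' \<subseteq> M \<and> closed T' \<and> invariant_set X \<sigma> T'"
    then have "T' \<in> F" using M unfolding F_def by auto
    then have "X - T' \<in> A" unfolding A_def by blast
    moreover have "X - M \<subseteq> X - T'" using T' by blast
    ultimately have "X - T' = X - M" using max by blast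
    moreover have "T' \<subseteq> X" "M \<subseteq> X" using FX M \<open>T' \<in> F\<close> by auto
    ultimately show "T' = M" by (metis Diff_Diff_Int inf.absorb_iff2)
  qed
  then show ?thesis using M unfolding F_def by auto
qed


lemma chain_trans:
  assumes "eps_chain X \<sigma> e x z" "eps_chain X \<sigma> e z y"
  shows "eps_chain X \<sigma> e x y"
proof -
  obtain n p where p: "p 0 = x" "p n = z" "\<forall>i\<le>n. p i \<in> X" "\<forall>i<n. dist (\<sigma> (p i)) (p (Suc i)) < e"
    using assms(1) unfolding eps_chain_def by blast
  obtain m q where q: "q 0 = z" "q m = y" "\<forall>i\<le>m. q i \<in> X" "\<forall>i<m. dist (\<sigma> (q i)) (q (Suc i)) < e"
    using assms(2) unfolding eps_chain_def by blast
  define r where "r i = (if i \<le> n then p i else q (i - n))" for i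
  have "r 0 = x" using p by (simp add: r_def)
  moreover have "r (n + m) = y" using p q by (cases m) (auto simp: r_def)
  moreover have "\<forall>i\<le>n+m. r i \<in> X"
  proof (intro allI impI)
    fix i assume "i \<le> n + m"
    then show "r i \<in> X" using p q by (cases "i \<le> n") (auto simp: r_def)
  qed
  moreover have "\<forall>i<n+m. dist (\<sigma> (r i)) (r (Suc i)) < e"
  proof (intro allI impI)
    fix i assume i: "i < n + m"
    consider "i < n" | "i = n" | "i > n" by arith
    then show "dist (\<sigma> (r i)) (r (Suc i)) < e"
    proof cases
      case 1 then show ?thesis using p by (simp add: r_def)
    next
      case 2
      then have "r i = q 0" "r (Suc i) = q (Suc 0)" using p q by (auto simp: r_def)
      moreover have "0 < m" using i 2 by arith
      then have "dist (\<sigma> (q 0)) (q (Suc 0)) < e" using q(4) by blast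
      ultimately show ?thesis by simp
    next
      case 3
      then have "r i = q (i - n)" "r (Suc i) = q (Suc (i - n))" by (auto simp: r_def Suc_diff_le)
      moreover have "i - n < m" using i 3 by arith
      ultimately show ?thesis using q by simp
    qed
  qed
  ultimately show ?thesis unfolding eps_chain_def by blast
qed

lemma alpha_limit:
  assumes X: "compact X" and hom: "homeomorphism X X \<sigma> \<tau>" and y: "y \<in> X"
  shows "\<exists>A. A \<noteq> {} \<and> closed A \<and> invariant_set X \<sigma> A \<and> (\<forall>w\<in>A. \<forall>e>0. eps_chain X \<sigma> e w y)"
proof -
  have tX: "\<tau> z \<in> X" if "z \<in> X" for z using hom that unfolding homeomorphism_def by blast
  have sX: "\<sigma> z \<in> X" if "z \<in> X" for z using hom that unfolding homeomorphism_def by blast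
  have st: "\<sigma> (\<tau> z) = z" if "z \<in> X" for z using hom that by (rule homeomorphism_apply2)
  have ts: "\<tau> (\<sigma> z) = z" if "z \<in> X" for z using hom that by (rule homeomorphism_apply1)
  have cs: "continuous_on X \<sigma>" and ct: "continuous_on X \<tau>" using hom unfolding homeomorphism_def by auto
  have cX: "closed X" using X by (rule compact_imp_closed)
  have itX: "(\<tau> ^^ n) y \<in> X" for n by (induction n) (auto simp: y tX)
  have sit: "\<sigma> ((\<tau> ^^ Suc n) y) = (\<tau> ^^ n) y" for n using st[OF itX[of n]] by simp
  define f where "f N = closure ((\<lambda>n. (\<tau> ^^ n) y) ` {N..})" for N
  define A where "A = (\<Inter>N. f N)"
  have fX: "f N \<subseteq> X" for N unfolding f_def using itX cX by (intro closure_minimal) auto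
  have AX: "A \<subseteq> X" using fX unfolding A_def by blast
  have clA: "closed A" unfolding A_def f_def by auto
  have neA: "A \<noteq> {}"
  proof -
    have "X \<inter> (\<Inter>N\<in>UNIV. f N) \<noteq> {}"
    proof (rule compact_imp_fip_image[OF X])
      show "closed (f i)" for i unfolding f_def by simp
      fix I' :: "nat set" assume I': "finite I'"
      define M where "M = Max (insert 0 I')"
      have "N \<le> M" if "N \<in> I'" for N unfolding M_def using I' that by simp
      then have "(\<tau> ^^ M) y \<in> f N" if "N \<in> I'" for N
        unfolding f_def using that by (intro subsetD[OF closure_subset]) auto
      then have "(\<tau> ^^ M) y \<in> X \<inter> (\<Inter>N\<in>I'. f N)" using itX by auto
      then show "X \<inter> (\<Inter>N\<in>I'. f N) \<noteq> {}" by blast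
    qed
    then show ?thesis unfolding A_def by auto
  qed
  have sf: "\<sigma> ` f (Suc N) \<subseteq> f N" for N
  proof -
    have "\<sigma> ` ((\<lambda>n. (\<tau> ^^ n) y) ` {Suc N..}) \<subseteq> f N"
    proof
      fix v assume "v \<in> \<sigma> ` ((\<lambda>n. (\<tau> ^^ n) y) ` {Suc N..})"
      then obtain n where n: "n \<ge> Suc N" "v = \<sigma> ((\<tau> ^^ n) y)" by auto
      then obtain m where m: "n = Suc m" "m \<ge> N" by (cases n) auto
      then have "v = (\<tau> ^^ m) y" using n sit by simp
      then show "v \<in> f N" unfolding f_def using m by (intro subsetD[OF closure_subset]) auto
    qed
    moreover have "continuous_on (closure ((\<lambda>n. (\<tau> ^^ n) y) ` {Suc N..})) \<sigma>"
      using cs fX[of "Suc N"] unfolding f_def by (rule continuous_on_subset)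
    ultimately show ?thesis unfolding f_def[of "Suc N"]
      by (intro image_closure_subset) (auto simp: f_def)
  qed
  have tf: "\<tau> ` f N \<subseteq> f (Suc N)" for N
  proof -
    have "\<tau> ` ((\<lambda>n. (\<tau> ^^ n) y) ` {N..}) \<subseteq> f (Suc N)"
    proof
      fix v assume "v \<in> \<tau> ` ((\<lambda>n. (\<tau> ^^ n) y) ` {N..})"
      then obtain n where n: "n \<ge> N" "v = \<tau> ((\<tau> ^^ n) y)" by auto
      then have "v = (\<tau> ^^ Suc n) y" by simp
      moreover have "Suc n \<in> {Suc N..}" using n by simp
      ultimately have "v \<in> (\<lambda>n. (\<tau> ^^ n) y) ` {Suc N..}" by (rule_tac rev_image_eqI[of "Suc n"]) simp_all
      then show "v \<in> f (Suc N)" unfolding f_def by (rule subsetD[OF closure_subset])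
    qed
    moreover have "continuous_on (closure ((\<lambda>n. (\<tau> ^^ n) y) ` {N..})) \<tau>"
      using ct fX[of "N"] unfolding f_def by (rule continuous_on_subset)
    ultimately show ?thesis unfolding f_def[of N]
      by (intro image_closure_subset) (auto simp: f_def)
  qed
  have inv: "invariant_set X \<sigma> A"
    unfolding invariant_set_def
  proof (intro conjI AX equalityI subsetI)
    fix v assume "v \<in> \<sigma> ` A"
    then obtain w where w: "w \<in> A" "v = \<sigma> w" by auto
    have "v \<in> f N" for N using w sf[of N] unfolding A_def by blast
    then show "v \<in> A" unfolding A_def by blast
  next
    fix v assume v: "v \<in> A"
    have "\<tau> v \<in> f N" for N
    proof (cases N)
      case 0
      have "\<tau> v \<in> f (Suc 0)" using v tf[of 0] unfolding A_def by blast
      moreover have "f (Suc 0) \<subseteq> f 0" unfolding f_def by (intro closure_mono) auto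
      ultimately show ?thesis using 0 by blast
    next
      case (Suc m)
      then show ?thesis using v tf[of m] unfolding A_def by blast
    qed
    then have "\<tau> v \<in> A" unfolding A_def by blast
    moreover have "v = \<sigma> (\<tau> v)" using st v AX by auto
    ultimately show "v \<in> \<sigma> ` A" by blast
  qed
  have ch: "eps_chain X \<sigma> e w y" if w: "w \<in> A" and e: "e > 0" for w e
  proof -
    have wX: "w \<in> X" using w AX by auto
    obtain d where d: "d > 0" "\<forall>v\<in>X. dist v w < d \<longrightarrow> dist (\<sigma> v) (\<sigma> w) < e"
      using cs wX e unfolding continuous_on_iff by blast
    have "w \<in> f 1" using w unfolding A_def by blast
    then obtain v where v: "v \<in> (\<lambda>n. (\<tau> ^^ n) y) ` {1..}" "dist v w < d"
      unfolding f_def closure_approachable using d(1) by blast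
    then obtain n where n: "n \<ge> 1" "v = (\<tau> ^^ n) y" by auto
    define p where "p i = (if i = 0 then w else (\<tau> ^^ (n - i)) y)" for i
    have "p 0 = w" by (simp add: p_def)
    moreover have "p n = y" using n by (simp add: p_def)
    moreover have "\<forall>i\<le>n. p i \<in> X" using wX itX by (simp add: p_def)
    moreover have "\<forall>i<n. dist (\<sigma> (p i)) (p (Suc i)) < e"
    proof (intro allI impI)
      fix i assume i: "i < n"
      show "dist (\<sigma> (p i)) (p (Suc i)) < e"
      proof (cases "i = 0")
        case True
        obtain m where m: "n = Suc m" using n by (cases n) auto
        have "dist (\<sigma> v) (\<sigma> w) < e" using d(2) v(2) n itX by blast
        moreover have "\<sigma> v = (\<tau> ^^ m) y" using n m sit by simp
        ultimately show ?thesis using True m by (simp add: p_def dist_commute)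
      next
        case False
        have eq: "n - i = Suc (n - Suc i)" using i by arith
        have "\<sigma> (p i) = p (Suc i)" using False eq sit by (simp add: p_def)
        then show ?thesis using e by simp
      qed
    qed
    ultimately show ?thesis unfolding eps_chain_def by blast
  qed
  show ?thesis using neA clA inv ch by blast
qed

theorem theorem10p15:
  fixes X :: "'a::metric_space set" and \<sigma> :: "'a \<Rightarrow> 'a"
    and Y :: "nat \<Rightarrow> 'a set" and k :: nat
  assumes "cantor_set X"
    and "\<exists>\<tau>. homeomorphism X X \<sigma> \<tau>"
    and "aperiodic X \<sigma>"
    and "{S. minimal_set X \<sigma> S} = Y ` {1..k}"
  shows "chain_transitive X \<sigma> \<longleftrightarrow> (\<forall>i\<in>{1..k}. chain_basin X \<sigma> (Y i) = X)"
proof -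
  obtain \<tau> where hom: "homeomorphism X X \<sigma> \<tau>" using assms(2) by blast
  have X: "compact X" using assms(1) unfolding cantor_set_def by blast
  have minY: "minimal_set X \<sigma> (Y i)" if "i \<in> {1..k}" for i using assms(4) that by blast
  show ?thesis
  proof
    assume ct: "chain_transitive X \<sigma>"
    show "\<forall>i\<in>{1..k}. chain_basin X \<sigma> (Y i) = X"
    proof
      fix i assume i: "i \<in> {1..k}"
      have "Y i \<noteq> {}" "Y i \<subseteq> X" using minY[OF i] unfolding minimal_set_def invariant_set_def by auto
      then obtain y where y: "y \<in> Y i" "y \<in> X" by blast
      show "chain_basin X \<sigma> (Y i) = X"
        unfolding chain_basin_def using ct y unfolding chain_transitive_def by blast
    qed
  next
    assume E: "\<forall>i\<in>{1..k}. chain_basin X \<sigma> (Y i) = X"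
    show "chain_transitive X \<sigma>"
      unfolding chain_transitive_def
    proof (intro ballI allI impI)
      fix x y e assume x: "x \<in> X" and y: "y \<in> X" and e: "(e::real) > 0"
      obtain A where A: "A \<noteq> {}" "closed A" "invariant_set X \<sigma> A"
          "\<forall>w\<in>A. \<forall>e>0. eps_chain X \<sigma> e w y"
        using alpha_limit[OF X hom y] by blast
      obtain M where M: "minimal_set X \<sigma> M" "M \<subseteq> A"
        using exists_minimal[OF X hom A(1-3)] by blast
      then obtain j where j: "j \<in> {1..k}" "M = Y j" using assms(4) by blast
      have "x \<in> chain_basin X \<sigma> (Y j)" using E j x by blast
      then obtain z where z: "z \<in> Y j" "eps_chain X \<sigma> e x z"
        unfolding chain_basin_def using e by blast
      have "eps_chain X \<sigma> e z y" using A(4) M(2) j(2) z(1) e by blast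
      then show "eps_chain X \<sigma> e x y" by (rule chain_trans[OF z(2)])
    qed
  qed
qed

end
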